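(* Consider DODA in the setting of the context. Assume the maximum delay is bounded by $\tau$, that the feedback associated with time step $t$ is the whole vector field $V_t=\nabla f_t$ (which can be evaluated at any point immediately, without delay), and that each $V_t$ is $L$-Lipschitz continuous. Take guesses $\tilde g_{t+1/2}=\tilde V_t(x_t)$, where $\tilde V_t=V_s$ for some $s\in\mathcal S_t$, and learning rates satisfying $\eta_{t+1}\le\eta_t$, $(2\tau+1)\eta_t\le\gamma_t$ and $2\gamma_t^2L^2\le1$ for all $t$. Then for every $p\in\mathcal V$ the regret evaluated at $x_{3/2},\dots,x_{T+1/2}$ satisfies \[R_T(p)\le\frac{\|p-x_1\|^2}{2\eta_T}+\sum_{t=1}^T\gamma_t\|V_t(x_t)-\tilde V_t(x_t)\|^2.\]
   Context: Unconstrained Euclidean setting: $\mathcal V$ finite-dimensional Euclidean space; losses $f_t:\mathcal V\to\mathbb R$ convex and differentiable. At each round $t=1,\dots,T$ one agent is active. $\mathcal S_t\subset\{1,\dots,t-1\}$ is the set of timestamps $s$ whose feedback is available to the active agent at time $t$ (nondecreasing in time for each agent). DODA: given $x_1\in\mathcal V$, $x_t=x_1-\eta_t\sum_{s\in\mathcal S_t}g_{s+1/2}$ and $x_{t+1/2}=x_t-\gamma_t\tilde g_{t+1/2}$; the agent plays $x_{t+1/2}$ and $g_{t+1/2}=V_t(x_{t+1/2})$. Regret: $R_T(p)=\sum_{t=1}^Tf_t(x_{t+1/2})-\sum_{t=1}^Tf_t(p)$. Maximum delay bounded by $\tau$: $\{1,\dots,t-\tau-1\}\subset\mathcal S_t$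 for all $t$. *)

theory Defs
  imports "HOL-Analysis.Analysis"
begin

end

theory Submission
  imports Defs
begin
lemma conv_grad:
  fixes f :: "'a::real_inner \<Rightarrow> real"
  assumes cv: "convex_on UNIV f" and g: "GDERIV f y :> D"
  shows "f y + D \<bullet> (z - y) \<le> f z"
proof -
  define \<phi> where "\<phi> = (\<lambda>s::real. f (y + s *\<^sub>R (z - y)))"
  have cvp: "convex_on UNIV \<phi>"
  proof (rule convex_onI)
    fix t a b :: real assume "0 < t" "t < 1"
    have "y + ((1 - t) *\<^sub>R a + t *\<^sub>R b) *\<^sub>R (z - y)
        = (1 - t) *\<^sub>R (y + a *\<^sub>R (z - y)) + t *\<^sub>R (y + b *\<^sub>R (z - y))"
      by (simp add: algebra_simps)
    then show "\<phi> ((1 - t) *\<^sub>R a + t *\<^sub>R b) \<le> (1 - t) * \<phi> a + t * \<phi> b"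
      unfolding \<phi>_def using convex_onD[OF cv, of t] \<open>0 < t\<close> \<open>t < 1\<close> by simp
  qed simp
  have "((\<lambda>s::real. y + s *\<^sub>R (z - y)) has_derivative (\<lambda>h. h *\<^sub>R (z - y))) (at 0)"
    by (auto intro!: derivative_eq_intros)
  moreover have "(f has_derivative (\<lambda>h. h \<bullet> D)) (at (y + 0 *\<^sub>R (z - y)))"
    using g by (simp add: gderiv_def)
  ultimately have "((f \<circ> (\<lambda>s::real. y + s *\<^sub>R (z - y))) has_derivative ((\<lambda>h. h \<bullet> D) \<circ> (\<lambda>h. h *\<^sub>R (z - y)))) (at 0)"
    by (rule diff_chain_at)
  hence "(\<phi> has_derivative (\<lambda>h. (h *\<^sub>R (z - y)) \<bullet> D)) (at 0)"
    unfolding \<phi>_def by (simp add: comp_def)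
  hence "(\<phi> has_field_derivative (D \<bullet> (z - y))) (at 0)"
    by (simp add: has_field_derivative_def inner_commute mult.commute[of _ "D \<bullet> (z - y)"])
  from convex_on_imp_above_tangent[OF cvp connected_UNIV _ _, of 0 1, simplified, OF this]
  show ?thesis unfolding \<phi>_def by simp
qed

lemma quad_bound:
  fixes G a :: "'a::real_inner"
  assumes "0 < e"
  shows "G \<bullet> a - e / 2 * norm G ^ 2 \<le> norm a ^ 2 / (2 * e)"
proof -
  have "0 \<le> norm (a - e *\<^sub>R G) ^ 2" by simp
  also have "norm (a - e *\<^sub>R G) ^ 2 = norm a ^ 2 - 2 * e * (G \<bullet> a) + e^2 * norm G ^ 2"
    by (simp add: power2_norm_eq_inner inner_diff_left inner_diff_right inner_commute algebra_simps)
      (simp add: power2_eq_square)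
  finally have "2 * e * (G \<bullet> a - e / 2 * norm G ^ 2) \<le> norm a ^ 2"
    by (simp add: algebra_simps power2_eq_square)
  then show ?thesis using assms by (simp add: field_simps)
qed

lemma inner_half:
  fixes g h :: "'a::real_inner"
  shows "g \<bullet> h \<le> norm g ^ 2 / 2 + norm h ^ 2 / 2"
proof -
  have "0 \<le> norm (g - h) ^ 2" by simp
  also have "norm (g - h) ^ 2 = norm g ^ 2 - 2 * (g \<bullet> h) + norm h ^ 2"
    by (simp add: power2_norm_eq_inner inner_diff_left inner_diff_right inner_commute algebra_simps)
  finally show ?thesis by simp
qed

lemma norm_add_sq:
  fixes A b :: "'a::real_inner"
  shows "norm (A + b) ^ 2 = norm A ^ 2 + 2 * (A \<bullet> b) + norm b ^ 2"
  by (simp add: power2_norm_eq_inner inner_add_left inner_add_right inner_commute algebra_simps)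

theorem theorem7:
  fixes f :: "nat \<Rightarrow> 'a::euclidean_space \<Rightarrow> real"
    and V Vtil :: "nat \<Rightarrow> 'a \<Rightarrow> 'a"
    and S :: "nat \<Rightarrow> nat set"
    and agent :: "nat \<Rightarrow> 'b"
    and x xh :: "nat \<Rightarrow> 'a"
    and \<eta> \<gamma> :: "nat \<Rightarrow> real"
    and L :: real and \<tau> T :: nat and p :: 'a
  assumes convex: "\<And>t. convex_on UNIV (f t)"
    and grad: "\<And>t y. GDERIV (f t) y :> V t y"
    and lipschitz: "\<And>t y z. norm (V t y - V t z) \<le> L * norm (y - z)"
    and S_sub: "\<And>t. S t \<subseteq> {1..<t}"
    and S_mono: "\<And>t t'. 1 \<le> t \<Longrightarrow> t \<le> t' \<Longrightarrow> agent t = agent t' \<Longrightarrow> S t \<subseteq> S t'"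
    and delay: "\<And>t. 1 \<le> t \<Longrightarrow> {1..<t - \<tau>} \<subseteq> S t"
    and guess: "\<And>t. 1 \<le> t \<Longrightarrow>
                  (\<exists>s\<in>S t. Vtil t = V s) \<or> (S t = {} \<and> Vtil t = (\<lambda>_. 0))"
    and x_def: "\<And>t. 1 \<le> t \<Longrightarrow> x t = x 1 - \<eta> t *\<^sub>R (\<Sum>s\<in>S t. V s (xh s))"
    and xh_def: "\<And>t. 1 \<le> t \<Longrightarrow> xh t = x t - \<gamma> t *\<^sub>R Vtil t (x t)"
    and eta_pos: "\<And>t. 1 \<le> t \<Longrightarrow> 0 < \<eta> t"
    and eta_mono: "\<And>t. 1 \<le> t \<Longrightarrow> \<eta> (t + 1) \<le> \<eta> t"
    and eta_gamma: "\<And>t. 1 \<le> t \<Longrightarrow> (2 * real \<tau> + 1) * \<eta> t \<le> \<gamma> t"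
    and gamma_L: "\<And>t. 1 \<le> t \<Longrightarrow> 2 * \<gamma> t ^ 2 * L ^ 2 \<le> 1"
    and T_pos: "1 \<le> T"
  shows "(\<Sum>t=1..T. f t (xh t)) - (\<Sum>t=1..T. f t p)
           \<le> norm (p - x 1) ^ 2 / (2 * \<eta> T)
              + (\<Sum>t=1..T. \<gamma> t * norm (V t (x t) - Vtil t (x t)) ^ 2)"
proof -
  define g where "g t = V t (xh t)" for t
  define G where "G t = (\<Sum>s\<in>{1..<t}. g s)" for t
  define w where "w t = x 1 - \<eta> t *\<^sub>R G t" for t
  define M where "M t = {1..<t} - S t" for t
  define q where "q t = Vtil t (x t)" for t
  define b where "b s = \<eta> s * norm (g s) ^ 2 / 2" for s
  have eta_anti: "\<eta> t \<le> \<eta> s" if "1 \<le> s" "s \<le> t" for s t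
    using that(2,1)
  proof (induct t rule: dec_induct)
    case base then show ?case by simp
  next
    case (step n)
    then show ?case using eta_mono[of n] by simp
  qed
  have gam_pos: "0 < \<gamma> t" if "1 \<le> t" for t
  proof -
    have "0 < (2 * real \<tau> + 1) * \<eta> t" using eta_pos[OF that] by simp
    then show ?thesis using eta_gamma[OF that] by linarith
  qed
  have b_nn: "0 \<le> b s" if "1 \<le> s" for s
    unfolding b_def using eta_pos[OF that] by simp
  have step1: "f t (xh t) - f t p \<le> g t \<bullet> (xh t - p)" for t
  proof -
    have "f t (xh t) + g t \<bullet> (p - xh t) \<le> f t p"
      unfolding g_def by (rule conv_grad[OF convex grad])
    moreover have "g t \<bullet> (p - xh t) = - (g t \<bullet> (xh t - p))"
      by (simp add: inner_diff_right)
    ultimately show ?thesis by linarith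
  qed
  have ftrl: "(\<Sum>t=1..n. g t \<bullet> w t - \<eta> t / 2 * norm (g t) ^ 2)
      \<le> G (n+1) \<bullet> x 1 - \<eta> n / 2 * norm (G (n+1)) ^ 2" if "1 \<le> n" for n
    using that
  proof (induct n rule: dec_induct)
    case base
    have "G 1 = 0" unfolding G_def by simp
    moreover have "G (1+1) = g 1"
    proof -
      have "{1..<2::nat} = {1}" by auto
      then show ?thesis unfolding G_def by simp
    qed
    ultimately show ?case unfolding w_def by simp
  next
    case (step n)
    define A where "A = G (Suc n)"
    define c where "c = g (Suc n)"
    have GS: "G (Suc n + 1) = A + c"
      unfolding A_def c_def G_def using step(1) by (simp add: sum.atLeastLessThan_Suc)
    have en: "\<eta> (Suc n) \<le> \<eta> n" using eta_mono[of n] step(1) by simp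
    have "(\<Sum>t=1..Suc n. g t \<bullet> w t - \<eta> t / 2 * norm (g t) ^ 2)
        = (\<Sum>t=1..n. g t \<bullet> w t - \<eta> t / 2 * norm (g t) ^ 2)
          + (c \<bullet> (x 1 - \<eta> (Suc n) *\<^sub>R A) - \<eta> (Suc n) / 2 * norm c ^ 2)"
      using step(1) unfolding A_def c_def w_def by simp
    also have "\<dots> \<le> (A \<bullet> x 1 - \<eta> n / 2 * norm A ^ 2)
          + (c \<bullet> (x 1 - \<eta> (Suc n) *\<^sub>R A) - \<eta> (Suc n) / 2 * norm c ^ 2)"
      using step(3) unfolding A_def by simp
    also have "\<dots> \<le> (A + c) \<bullet> x 1 - \<eta> (Suc n) / 2 * norm (A + c) ^ 2"
    proof -
      have "\<eta> (Suc n) / 2 * norm A ^ 2 \<le> \<eta> n / 2 * norm A ^ 2"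
        using en by (intro mult_right_mono) auto
      then show ?thesis
        by (simp add: norm_add_sq inner_add_left inner_diff_right inner_commute algebra_simps)
    qed
    finally show ?case using GS by simp
  qed
  have step3: "G (T+1) \<bullet> x 1 - \<eta> T / 2 * norm (G (T+1)) ^ 2 - G (T+1) \<bullet> p
      \<le> norm (p - x 1) ^ 2 / (2 * \<eta> T)"
  proof -
    have "G (T+1) \<bullet> (x 1 - p) - \<eta> T / 2 * norm (G (T+1)) ^ 2 \<le> norm (x 1 - p) ^ 2 / (2 * \<eta> T)"
      by (rule quad_bound) (use eta_pos T_pos in auto)
    then show ?thesis by (simp add: inner_diff_right norm_minus_commute)
  qed
  have Gp: "G (T+1) \<bullet> p = (\<Sum>t=1..T. g t \<bullet> p)"
    unfolding G_def by (simp add: inner_sum_left atLeastLessThanSuc_atLeastAtMost)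
  have step4: "g t \<bullet> (xh t - w t) = \<eta> t * (g t \<bullet> (\<Sum>s\<in>M t. g s)) - \<gamma> t * (g t \<bullet> q t)"
    if "1 \<le> t" for t
  proof -
    have "(\<Sum>s\<in>M t. g s) = G t - (\<Sum>s\<in>S t. g s)"
      unfolding M_def G_def by (rule sum_diff) (use S_sub in auto)
    then have "xh t - w t = \<eta> t *\<^sub>R (\<Sum>s\<in>M t. g s) - \<gamma> t *\<^sub>R q t"
      unfolding w_def q_def xh_def[OF that] x_def[OF that] g_def
      by (simp add: algebra_simps flip: scaleR_right_distrib)
    then show ?thesis by (simp add: inner_diff_right)
  qed
  have Mfin: "finite (M t)" for t unfolding M_def by simp
  have Msub: "M t \<subseteq> {t - \<tau>..<t} \<inter> {1..<t}" if "1 \<le> t" for t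
    using delay[OF that] unfolding M_def by (auto simp: subset_iff not_less[symmetric])
  have cardM: "card (M t) \<le> \<tau>" if "1 \<le> t" for t
  proof -
    have "card (M t) \<le> card {t - \<tau>..<t}"
      using Msub[OF that] by (intro card_mono) auto
    then show ?thesis by simp
  qed
  have step5: "\<eta> t * (g t \<bullet> (\<Sum>s\<in>M t. g s)) \<le> real \<tau> * (\<eta> t * norm (g t) ^ 2 / 2) + (\<Sum>s\<in>M t. b s)"
    if "1 \<le> t" for t
  proof -
    have "\<eta> t * (g t \<bullet> (\<Sum>s\<in>M t. g s)) = (\<Sum>s\<in>M t. \<eta> t * (g t \<bullet> g s))"
      by (simp add: inner_sum_right sum_distrib_left)
    also have "\<dots> \<le> (\<Sum>s\<in>M t. \<eta> t * norm (g t) ^ 2 / 2 + b s)"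
    proof (rule sum_mono)
      fix s assume s: "s \<in> M t"
      then have s1: "1 \<le> s" "s \<le> t" unfolding M_def by auto
      have "\<eta> t * (g t \<bullet> g s) \<le> \<eta> t * (norm (g t) ^ 2 / 2 + norm (g s) ^ 2 / 2)"
        using eta_pos[OF that] inner_half by (intro mult_left_mono) auto
      also have "\<eta> t * (norm (g s) ^ 2 / 2) \<le> \<eta> s * (norm (g s) ^ 2 / 2)"
        using eta_anti[OF s1] by (intro mult_right_mono) auto
      ultimately show "\<eta> t * (g t \<bullet> g s) \<le> \<eta> t * norm (g t) ^ 2 / 2 + b s"
        unfolding b_def by (simp add: algebra_simps)
    qed
    also have "\<dots> = real (card (M t)) * (\<eta> t * norm (g t) ^ 2 / 2) + (\<Sum>s\<in>M t. b s)"
      by (simp add: sum.distrib)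
    also have "\<dots> \<le> real \<tau> * (\<eta> t * norm (g t) ^ 2 / 2) + (\<Sum>s\<in>M t. b s)"
      using cardM[OF that] eta_pos[OF that] by (intro add_right_mono mult_right_mono) auto
    finally show ?thesis .
  qed
  have step6: "(\<Sum>t=1..T. \<Sum>s\<in>M t. b s) \<le> real \<tau> * (\<Sum>s=1..T. b s)"
  proof -
    have "(\<Sum>t=1..T. \<Sum>s\<in>M t. b s) = (\<Sum>t=1..T. \<Sum>s=1..T. if s \<in> M t then b s else 0)"
    proof (rule sum.cong[OF refl])
      fix t assume t: "t \<in> {1..T}"
      have "{s \<in> {1..T}. s \<in> M t} = M t" using t unfolding M_def by auto
      then show "(\<Sum>s\<in>M t. b s) = (\<Sum>s=1..T. if s \<in> M t then b s else 0)"
        using sum.inter_filter[of "{1..T}" b "\<lambda>s. s \<in> M t"] by simp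
    qed
    also have "\<dots> = (\<Sum>s=1..T. \<Sum>t=1..T. if s \<in> M t then b s else 0)"
      by (rule sum.swap)
    also have "\<dots> = (\<Sum>s=1..T. b s * real (card {t \<in> {1..T}. s \<in> M t}))"
    proof (rule sum.cong[OF refl])
      fix s
      show "(\<Sum>t=1..T. if s \<in> M t then b s else 0) = b s * real (card {t \<in> {1..T}. s \<in> M t})"
        using sum.inter_filter[of "{1..T}" "\<lambda>_. b s" "\<lambda>t. s \<in> M t", symmetric] by simp
    qed
    also have "\<dots> \<le> (\<Sum>s=1..T. b s * real \<tau>)"
    proof (rule sum_mono)
      fix s assume s: "s \<in> {1..T}"
      have "{t \<in> {1..T}. s \<in> M t} \<subseteq> {s+1..s+\<tau>}"
      proof
        fix t assume "t \<in> {t \<in> {1..T}. s \<in> M t}"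
        then have "t \<in> {1..T}" "s \<in> M t" by auto
        then have "s \<in> {t - \<tau>..<t}" "1 \<le> t" using Msub[of t] by auto
        then show "t \<in> {s+1..s+\<tau>}" by auto
      qed
      then have "card {t \<in> {1..T}. s \<in> M t} \<le> card {s+1..s+\<tau>}" by (intro card_mono) auto
      then have "real (card {t \<in> {1..T}. s \<in> M t}) \<le> real \<tau>" by simp
      then show "b s * real (card {t \<in> {1..T}. s \<in> M t}) \<le> b s * real \<tau>"
        using b_nn[of s] s by (intro mult_left_mono) auto
    qed
    also have "\<dots> = real \<tau> * (\<Sum>s=1..T. b s)"
      by (simp add: sum_distrib_left mult.commute)
    finally show ?thesis .
  qed
  have step7: "(2 * real \<tau> + 1) * (\<eta> t * norm (g t) ^ 2 / 2) - \<gamma> t * (g t \<bullet> q t)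
      \<le> \<gamma> t * norm (V t (x t) - Vtil t (x t)) ^ 2" if "1 \<le> t" for t
  proof -
    define e where "e = V t (x t) - q t"
    define a where "a = norm (V t (xh t) - V t (x t))"
    have gp: "0 < \<gamma> t" using gam_pos[OF that] .
    have "(2 * real \<tau> + 1) * (\<eta> t * norm (g t) ^ 2 / 2) \<le> \<gamma> t * (norm (g t) ^ 2 / 2)"
      using eta_gamma[OF that] by (simp add: mult.assoc[symmetric] mult_right_mono)
    moreover have "\<gamma> t * (norm (g t) ^ 2 / 2) - \<gamma> t * (g t \<bullet> q t)
        = \<gamma> t / 2 * norm (g t - q t) ^ 2 - \<gamma> t / 2 * norm (q t) ^ 2"
      by (simp add: power2_norm_eq_inner inner_diff_left inner_diff_right inner_commute algebra_simps)
    moreover have "norm (g t - q t) ^ 2 \<le> 2 * a ^ 2 + 2 * norm e ^ 2"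
    proof -
      have "g t - q t = (V t (xh t) - V t (x t)) + e" unfolding e_def g_def by simp
      then have "norm (g t - q t) \<le> a + norm e" unfolding a_def by (metis norm_triangle_ineq)
      then have "norm (g t - q t) ^ 2 \<le> (a + norm e) ^ 2" by (intro power_mono) auto
      also have "\<dots> \<le> 2 * a ^ 2 + 2 * norm e ^ 2"
        using sum_squares_ge_zero[of "a - norm e" 0] by (simp add: power2_eq_square algebra_simps)
      finally show ?thesis .
    qed
    moreover have "a ^ 2 \<le> L ^ 2 * \<gamma> t ^ 2 * norm (q t) ^ 2"
    proof -
      have "xh t - x t = - (\<gamma> t *\<^sub>R q t)" unfolding q_def xh_def[OF that] by simp
      then have "a \<le> L * (\<gamma> t * norm (q t))" unfolding a_def
        using lipschitz[of t "xh t" "x t"] gp by simp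
      then have "a ^ 2 \<le> (L * (\<gamma> t * norm (q t))) ^ 2" unfolding a_def
        by (intro power_mono) auto
      then show ?thesis by (simp add: power_mult_distrib)
    qed
    moreover have "\<gamma> t * (L ^ 2 * \<gamma> t ^ 2 * norm (q t) ^ 2) \<le> \<gamma> t / 2 * norm (q t) ^ 2"
    proof -
      have "\<gamma> t * (L ^ 2 * \<gamma> t ^ 2 * norm (q t) ^ 2) = (2 * \<gamma> t ^ 2 * L ^ 2) * (\<gamma> t / 2 * norm (q t) ^ 2)"
        by (simp add: algebra_simps power2_eq_square)
      also have "\<dots> \<le> 1 * (\<gamma> t / 2 * norm (q t) ^ 2)"
        using gamma_L[OF that] gp by (intro mult_right_mono) auto
      finally show ?thesis by simp
    qed
    ultimately have A: "(2 * real \<tau> + 1) * (\<eta> t * norm (g t) ^ 2 / 2) - \<gamma> t * (g t \<bullet> q t)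
        \<le> \<gamma> t / 2 * norm (g t - q t) ^ 2 - \<gamma> t / 2 * norm (q t) ^ 2"
        "norm (g t - q t) ^ 2 \<le> 2 * a ^ 2 + 2 * norm e ^ 2"
        "a ^ 2 \<le> L ^ 2 * \<gamma> t ^ 2 * norm (q t) ^ 2"
        "\<gamma> t * (L ^ 2 * \<gamma> t ^ 2 * norm (q t) ^ 2) \<le> \<gamma> t / 2 * norm (q t) ^ 2"
      by linarith+
    have B: "\<gamma> t / 2 * norm (g t - q t) ^ 2 \<le> \<gamma> t / 2 * (2 * a ^ 2 + 2 * norm e ^ 2)"
      using A(2) gp by (intro mult_left_mono) auto
    have C: "\<gamma> t * a ^ 2 \<le> \<gamma> t * (L ^ 2 * \<gamma> t ^ 2 * norm (q t) ^ 2)"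
      using A(3) gp by (intro mult_left_mono) auto
    have D: "\<gamma> t / 2 * (2 * a ^ 2 + 2 * norm e ^ 2) = \<gamma> t * a ^ 2 + \<gamma> t * norm e ^ 2"
      by (simp add: algebra_simps)
    have "(2 * real \<tau> + 1) * (\<eta> t * norm (g t) ^ 2 / 2) - \<gamma> t * (g t \<bullet> q t) \<le> \<gamma> t * norm e ^ 2"
      using A(1,4) B C D by linarith
    then show ?thesis unfolding e_def q_def .
  qed
  have "(\<Sum>t=1..T. f t (xh t)) - (\<Sum>t=1..T. f t p) = (\<Sum>t=1..T. f t (xh t) - f t p)"
    by (simp add: sum_subtractf)
  also have "\<dots> \<le> (\<Sum>t=1..T. g t \<bullet> (xh t - p))"
    by (rule sum_mono) (rule step1)
  also have "\<dots> = (\<Sum>t=1..T. (g t \<bullet> w t - \<eta> t / 2 * norm (g t) ^ 2) - g t \<bullet> p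
        + (b t + g t \<bullet> (xh t - w t)))"
    by (rule sum.cong[OF refl]) (simp add: b_def inner_diff_right algebra_simps)
  also have "\<dots> = (\<Sum>t=1..T. g t \<bullet> w t - \<eta> t / 2 * norm (g t) ^ 2) - (\<Sum>t=1..T. g t \<bullet> p)
        + (\<Sum>t=1..T. b t + g t \<bullet> (xh t - w t))"
    by (simp add: sum.distrib sum_subtractf)
  also have "\<dots> \<le> norm (p - x 1) ^ 2 / (2 * \<eta> T) + (\<Sum>t=1..T. b t + g t \<bullet> (xh t - w t))"
    using ftrl[OF T_pos] step3 Gp by simp
  also have "(\<Sum>t=1..T. b t + g t \<bullet> (xh t - w t))
      \<le> (\<Sum>t=1..T. b t + real \<tau> * (\<eta> t * norm (g t) ^ 2 / 2) + (\<Sum>s\<in>M t. b s) - \<gamma> t * (g t \<bullet> q t))"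
    by (rule sum_mono) (use step4 step5 in fastforce)
  also have "\<dots> = (\<Sum>t=1..T. b t + real \<tau> * (\<eta> t * norm (g t) ^ 2 / 2) - \<gamma> t * (g t \<bullet> q t))
       + (\<Sum>t=1..T. \<Sum>s\<in>M t. b s)"
    by (simp add: sum.distrib sum_subtractf algebra_simps)
  also have "\<dots> \<le> (\<Sum>t=1..T. b t + real \<tau> * (\<eta> t * norm (g t) ^ 2 / 2) - \<gamma> t * (g t \<bullet> q t))
       + real \<tau> * (\<Sum>s=1..T. b s)"
    using step6 by simp
  also have "\<dots> = (\<Sum>t=1..T. (2 * real \<tau> + 1) * (\<eta> t * norm (g t) ^ 2 / 2) - \<gamma> t * (g t \<bullet> q t))"
  proof -
    have "(\<Sum>t=1..T. b t + real \<tau> * (\<eta> t * norm (g t) ^ 2 / 2) - \<gamma> t * (g t \<bullet> q t))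
       + real \<tau> * (\<Sum>s=1..T. b s)
       = (\<Sum>t=1..T. (b t + real \<tau> * (\<eta> t * norm (g t) ^ 2 / 2) - \<gamma> t * (g t \<bullet> q t))
          + real \<tau> * b t)"
      by (simp add: sum.distrib sum_distrib_left)
    also have "\<dots> = (\<Sum>t=1..T. (2 * real \<tau> + 1) * (\<eta> t * norm (g t) ^ 2 / 2) - \<gamma> t * (g t \<bullet> q t))"
      by (rule sum.cong[OF refl]) (simp add: b_def algebra_simps)
    finally show ?thesis .
  qed
  also have "\<dots> \<le> (\<Sum>t=1..T. \<gamma> t * norm (V t (x t) - Vtil t (x t)) ^ 2)"
    by (rule sum_mono) (use step7 in auto)
  finally show ?thesis by simp
qed
end
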